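(* Fix $C\neq1$ and fix $\epsilon\in(0,1)$, $\omega>0$ such that $\delta_0=\delta(C)-C\epsilon-\omega>0$. Fix $M>\frac1{\delta_0}$ and $\theta<M\delta_0-1$. There is a positive constant $N$ such that \[ \mathbb{P}\Big(\bigcup_{1\le i\le n}\{M\log n+1\le\#\mathcal{E}_i\le\epsilon n\}\Big)\le\frac1{n^\theta} \] for all $n\ge N$.
   Context: Let $C>0$ be a constant and $(\alpha_n)_{n\ge1}$ a sequence of nonnegative reals with $\alpha_n\to0$. For each $n$, consider the complete graph $K_n$ on vertex set $\{1,\dots,n\}$; each edge $e$ of $K_n$ is independently open with probability $p_n(e)$ and closed otherwise, where $\frac{C-\alpha_n}{n}\le p_n(e)\le\frac{C+\alpha_n}{n}$ for every edge $e$. Let $G$ be the resulting random graph of open edges, with probability measure $\mathbb{P}$. For a vertex $i$, $\mathcal{E}_i$ denotes the open component of $G$ containing $i$ (the set of vertices joined to $i$ by a path of open edges, together with $i$ itself), and $\#\mathcal{E}_i$ its number of vertices. $\delta(C)=C-1-\log C$. $\log$ is the natural logarithm. *)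

theory Defs
  imports "HOL-Probability.Probability"
begin

definition Kn_edges :: "nat \<Rightarrow> nat set set" where
  "Kn_edges n = {e. \<exists>i j. i \<in> {1..n} \<and> j \<in> {1..n} \<and> i \<noteq> j \<and> e = {i, j}}"

text \<open>Random graph: each edge e of K_n is independently open (True) with probability p e.
  Outcomes are functions from edges to bool (default False outside the edge set).\<close>
definition random_graph :: "nat \<Rightarrow> (nat set \<Rightarrow> real) \<Rightarrow> (nat set \<Rightarrow> bool) pmf" where
  "random_graph n p = Pi_pmf (Kn_edges n) False (\<lambda>e. bernoulli_pmf (p e))"

definition open_rel :: "nat \<Rightarrow> (nat set \<Rightarrow> bool) \<Rightarrow> (nat \<times> nat) set" where
  "open_rel n G = {(a, b). a \<in> {1..n} \<and> b \<in> {1..n} \<and> a \<noteq> b \<and> G {a, b}}"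

definition open_component :: "nat \<Rightarrow> (nat set \<Rightarrow> bool) \<Rightarrow> nat \<Rightarrow> nat set" where
  "open_component n G i = {j. (i, j) \<in> (open_rel n G)\<^sup>*}"

definition delta :: "real \<Rightarrow> real" where
  "delta C = C - 1 - ln C"

end

theory Submission
  imports Defs
begin


lemma finite_Kn_edges: "finite (Kn_edges n)"
proof -
  have "Kn_edges n \<subseteq> (\<lambda>(i,j). {i,j}) ` ({1..n}\<times>{1..n})"
    unfolding Kn_edges_def by auto
  thus ?thesis by (rule finite_subset) auto
qed

lemma prob_union_le:
  assumes "finite I"
  shows "measure_pmf.prob P (\<Union>i\<in>I. A i) \<le> (\<Sum>i\<in>I. measure_pmf.prob P (A i))"
  using assms by (intro measure_pmf.finite_measure_subadditive_finite) auto

lemma bern_True: "0 \<le> q \<Longrightarrow> q \<le> 1 \<Longrightarrow> measure_pmf.prob (bernoulli_pmf q) {True} = q"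
  by (simp add: measure_pmf_single)
lemma bern_False: "0 \<le> q \<Longrightarrow> q \<le> 1 \<Longrightarrow> measure_pmf.prob (bernoulli_pmf q) {False} = 1 - q"
  by (simp add: measure_pmf_single)



definition cutE :: "nat \<Rightarrow> nat set \<Rightarrow> nat set set" where
  "cutE n S = {e. \<exists>a\<in>S. \<exists>b\<in>{1..n}-S. e = {a,b}}"
definition treeE :: "nat set \<Rightarrow> nat \<Rightarrow> (nat \<Rightarrow> nat) \<Rightarrow> nat set set" where
  "treeE S i f = (\<lambda>v. {v, f v}) ` (S - {i})"
definition Ev :: "nat \<Rightarrow> nat set \<Rightarrow> nat \<Rightarrow> (nat \<Rightarrow> nat) \<Rightarrow> (nat set \<Rightarrow> bool) set" where
  "Ev n S i f = Pi (Kn_edges n) (\<lambda>e. if e \<in> treeE S i f then {True} else if e \<in> cutE n S then {False} else UNIV)"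
definition Fset :: "nat set \<Rightarrow> nat \<Rightarrow> (nat \<Rightarrow> nat) set" where
  "Fset S i = {f \<in> (S-{i}) \<rightarrow>\<^sub>E S. inj_on (\<lambda>v. {v, f v}) (S-{i}) \<and> (\<forall>v\<in>S-{i}. f v \<noteq> v)}"

lemma card_cutE:
  assumes "S \<subseteq> {1..n}"
  shows "card (cutE n S) = card S * (n - card S)"
proof -
  have eq: "cutE n S = (\<lambda>(a,b). {a,b}) ` (S \<times> ({1..n}-S))"
    unfolding cutE_def by auto
  have inj: "inj_on (\<lambda>(a,b). {a,b}) (S \<times> ({1..n}-S))"
    unfolding inj_on_def by (auto simp: doubleton_eq_iff)
  have fS: "finite S" using assms finite_subset by blast
  have "card ({1..n}-S) = n - card S" using assms fS by (simp add: card_Diff_subset)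
  thus ?thesis unfolding eq using card_image[OF inj] fS by (simp add: card_cartesian_product)
qed

lemma card_treeE:
  assumes "f \<in> Fset S i" "i \<in> S" "finite S"
  shows "card (treeE S i f) = card S - 1"
proof -
  have inj: "inj_on (\<lambda>v. {v, f v}) (S-{i})" using assms(1) unfolding Fset_def by blast
  show ?thesis unfolding treeE_def card_image[OF inj] using assms(2,3) by simp
qed

lemma treeE_sub:
  assumes "f \<in> Fset S i" "S \<subseteq> {1..n}"
  shows "treeE S i f \<subseteq> Kn_edges n"
proof
  fix e assume "e \<in> treeE S i f"
  then obtain v where v: "v \<in> S - {i}" "e = {v, f v}" unfolding treeE_def by blast
  have "f v \<in> S" "f v \<noteq> v" using assms(1) v(1) unfolding Fset_def by auto
  thus "e \<in> Kn_edges n" unfolding Kn_edges_def using v assms(2) by blast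
qed

lemma cutE_sub:
  shows "S \<subseteq> {1..n} \<Longrightarrow> cutE n S \<subseteq> Kn_edges n"
  unfolding cutE_def Kn_edges_def by blast

lemma treeE_cutE_disj:
  assumes "f \<in> Fset S i"
  shows "treeE S i f \<inter> cutE n S = {}"
proof (rule ccontr)
  assume "treeE S i f \<inter> cutE n S \<noteq> {}"
  then obtain v a b where v: "v \<in> S - {i}" "a \<in> S" "b \<notin> S" "{v, f v} = {a,b}"
    unfolding treeE_def cutE_def by blast
  have "f v \<in> S" using assms v(1) unfolding Fset_def by auto
  thus False using v by (auto simp: doubleton_eq_iff)
qed

lemma Ev_prob:
  assumes S: "S \<subseteq> {1..n}" and i: "i \<in> S" and f: "f \<in> Fset S i"
    and pp: "\<And>e. e \<in> Kn_edges n \<Longrightarrow> 0 \<le> pp e \<and> pp e \<le> 1 \<and> r \<le> pp e \<and> pp e \<le> q"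
  shows "measure_pmf.prob (random_graph n pp) (Ev n S i f) \<le> q^(card S - 1) * (1-r)^(card S * (n - card S))"
proof -
  let ?E = "Kn_edges n" and ?T = "treeE S i f" and ?Cu = "cutE n S"
  have fS: "finite S" using S finite_subset by blast
  have TE: "?T \<subseteq> ?E" using treeE_sub[OF f S] .
  have CE: "?Cu \<subseteq> ?E" using cutE_sub[OF S] .
  have dj: "?T \<inter> ?Cu = {}" using treeE_cutE_disj[OF f] .
  have "measure_pmf.prob (random_graph n pp) (Ev n S i f)
      = (\<Prod>e\<in>?E. measure_pmf.prob (bernoulli_pmf (pp e)) (if e \<in> ?T then {True} else if e \<in> ?Cu then {False} else UNIV))"
    unfolding random_graph_def Ev_def by (rule measure_Pi_pmf_Pi[OF finite_Kn_edges])
  also have "\<dots> = (\<Prod>e\<in>?E. if e \<in> ?T then pp e else if e \<in> ?Cu then 1 - pp e else 1)"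
    by (intro prod.cong refl) (auto simp: bern_True bern_False pp)
  also have "\<dots> = (\<Prod>e\<in>?T. pp e) * (\<Prod>e\<in>?Cu. 1 - pp e)"
  proof -
    have "(\<Prod>e\<in>?E. if e \<in> ?T then pp e else if e \<in> ?Cu then 1 - pp e else 1)
       = (\<Prod>e\<in>?E \<inter> {e. e \<in> ?T}. pp e) * (\<Prod>e\<in>?E \<inter> - {e. e \<in> ?T}. if e \<in> ?Cu then 1 - pp e else 1)"
      by (rule prod.If_cases[OF finite_Kn_edges])
    also have "(\<Prod>e\<in>?E \<inter> - {e. e \<in> ?T}. if e \<in> ?Cu then 1 - pp e else 1)
       = (\<Prod>e\<in>(?E \<inter> - {e. e \<in> ?T}) \<inter> {e. e \<in> ?Cu}. 1 - pp e) * (\<Prod>e\<in>(?E \<inter> - {e. e \<in> ?T}) \<inter> - {e. e \<in> ?Cu}. 1)"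
      by (rule prod.If_cases) (simp add: finite_Kn_edges)
    also have "(?E \<inter> - {e. e \<in> ?T}) \<inter> {e. e \<in> ?Cu} = ?Cu" using CE dj by blast
    also have "?E \<inter> {e. e \<in> ?T} = ?T" using TE by blast
    finally show ?thesis by simp
  qed
  also have "\<dots> \<le> q^(card ?T) * (1-r)^(card ?Cu)"
  proof (rule mult_mono)
    show "(\<Prod>e\<in>?T. pp e) \<le> q^(card ?T)"
      by (rule order.trans[OF prod_mono[of ?T pp "\<lambda>_. q"]]) (use TE pp in auto)
    show "(\<Prod>e\<in>?Cu. 1 - pp e) \<le> (1-r)^(card ?Cu)"
      by (rule order.trans[OF prod_mono[of ?Cu "\<lambda>e. 1 - pp e" "\<lambda>_. 1 - r"]]) (use CE pp in auto)
    show "0 \<le> q ^ card ?T"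
    proof (cases "?T = {}")
      case True thus ?thesis by simp
    next
      case False then obtain e where "e \<in> ?T" by blast
      hence "e \<in> Kn_edges n" using TE by blast
      hence "0 \<le> q" using pp[of e] by linarith
      thus ?thesis by simp
    qed
    show "0 \<le> (\<Prod>e\<in>?Cu. 1 - pp e)" using CE pp by (intro prod_nonneg) auto
  qed
  also have "\<dots> = q^(card S - 1) * (1-r)^(card S * (n - card S))"
    using card_treeE[OF f i fS] card_cutE[OF S] by simp
  finally show ?thesis .
qed



lemma open_rel_sub: "open_rel n G \<subseteq> {1..n} \<times> {1..n}"
  unfolding open_rel_def by auto

lemma comp_sub:
  assumes "i \<in> {1..n}"
  shows "open_component n G i \<subseteq> {1..n}"
proof
  fix j assume "j \<in> open_component n G i"
  hence "(i,j) \<in> (open_rel n G)\<^sup>*" unfolding open_component_def by simp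
  thus "j \<in> {1..n}"
  proof (induction rule: rtrancl_induct)
    case base thus ?case using assms by simp
  next
    case (step y z) thus ?case using open_rel_sub by blast
  qed
qed

lemma comp_Ev:
  fixes G :: "nat set \<Rightarrow> bool"
  assumes i: "i \<in> {1..n}"
  defines "S \<equiv> open_component n G i"
  shows "\<exists>f\<in>Fset S i. G \<in> Ev n S i f"
proof -
  define R where "R = open_rel n G"
  have SR: "S = {j. (i,j) \<in> R\<^sup>*}" unfolding S_def R_def open_component_def by simp
  define d where "d v = (LEAST m. (i,v) \<in> R^^m)" for v
  have dI: "(i,v) \<in> R^^(d v)" if "v \<in> S" for v
  proof -
    from that have "\<exists>m. (i,v) \<in> R^^m" unfolding SR using rtrancl_power by blast
    thus ?thesis unfolding d_def by (rule LeastI_ex)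
  qed
  have dle: "d v \<le> m" if "(i,v) \<in> R^^m" for v m
    unfolding d_def using that by (rule Least_le)
  have ex: "\<exists>u. u \<in> S \<and> (u,v) \<in> R \<and> d u < d v" if v: "v \<in> S - {i}" for v
  proof -
    have iv: "(i,v) \<in> R^^(d v)" using dI v by blast
    have "d v \<noteq> 0"
    proof
      assume "d v = 0" thus False using iv v by simp
    qed
    then obtain m where m: "d v = Suc m" using not0_implies_Suc by blast
    then obtain u where u: "(i,u) \<in> R^^m" "(u,v) \<in> R" using iv by (auto elim: relpow_Suc_E)
    have "u \<in> S" unfolding SR using u(1) relpow_imp_rtrancl by blast
    moreover have "d u < d v" using dle[OF u(1)] m by simp
    ultimately show ?thesis using u(2) by blast
  qed
  define g where "g v = (SOME u. u \<in> S \<and> (u,v) \<in> R \<and> d u < d v)" for v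
  have g: "g v \<in> S \<and> (g v, v) \<in> R \<and> d (g v) < d v" if "v \<in> S - {i}" for v
    unfolding g_def using someI_ex[OF ex[OF that]] .
  define f where "f = restrict g (S - {i})"
  have fv: "f v = g v" if "v \<in> S - {i}" for v using that unfolding f_def by simp
  have fF: "f \<in> Fset S i"
    unfolding Fset_def
  proof (intro CollectI conjI ballI)
    show "f \<in> (S - {i}) \<rightarrow>\<^sub>E S" unfolding f_def using g by auto
    show "f v \<noteq> v" if "v \<in> S - {i}" for v using g[OF that] fv[OF that] by auto
    show "inj_on (\<lambda>v. {v, f v}) (S - {i})"
    proof (rule inj_onI)
      fix v w assume v: "v \<in> S - {i}" and w: "w \<in> S - {i}" and eq: "{v, f v} = {w, f w}"
      show "v = w"
      proof (rule ccontr)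
        assume "v \<noteq> w"
        hence "v = f w" "w = f v" using eq by (auto simp: doubleton_eq_iff)
        thus False using g[OF v] g[OF w] fv[OF v] fv[OF w] by simp
      qed
    qed
  qed
  have Ssub: "S \<subseteq> {1..n}" unfolding S_def using comp_sub[OF i] .
  have "G \<in> Ev n S i f"
    unfolding Ev_def
  proof (rule Pi_I)
    fix e assume eE: "e \<in> Kn_edges n"
    show "G e \<in> (if e \<in> treeE S i f then {True} else if e \<in> cutE n S then {False} else UNIV)"
    proof (cases "e \<in> treeE S i f")
      case True
      then obtain v where v: "v \<in> S - {i}" "e = {v, f v}" unfolding treeE_def by blast
      have "(g v, v) \<in> R" using g[OF v(1)] by blast
      hence "G {g v, v}" unfolding R_def open_rel_def by simp
      hence "G e" using v fv[OF v(1)] by (simp add: insert_commute)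
      thus ?thesis using True by simp
    next
      case False
      show ?thesis
      proof (cases "e \<in> cutE n S")
        case True
        then obtain a b where ab: "a \<in> S" "b \<in> {1..n} - S" "e = {a,b}" unfolding cutE_def by blast
        have "\<not> G e"
        proof
          assume "G e"
          hence "(a,b) \<in> R" unfolding R_def open_rel_def using ab Ssub by auto
          hence "b \<in> S" using ab(1) unfolding SR by (auto intro: rtrancl_into_rtrancl)
          thus False using ab by blast
        qed
        thus ?thesis using True False by simp
      next
        case False2: False
        thus ?thesis using False by simp
      qed
    qed
  qed
  thus ?thesis using fF by blast
qed



lemma finite_Fset: "finite S \<Longrightarrow> finite (Fset S i)"
  unfolding Fset_def by (rule finite_subset[of _ "(S-{i}) \<rightarrow>\<^sub>E S"]) (auto intro: finite_PiE)

lemma card_Fset: "finite S \<Longrightarrow> i \<in> S \<Longrightarrow> card (Fset S i) \<le> card S ^ (card S - 1)"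
proof -
  assume fS: "finite S" and i: "i \<in> S"
  have "card (Fset S i) \<le> card ((S-{i}) \<rightarrow>\<^sub>E S)"
    unfolding Fset_def by (rule card_mono) (auto intro: finite_PiE fS)
  also have "\<dots> = card S ^ (card S - 1)" using fS i by (simp add: card_PiE)
  finally show ?thesis .
qed

lemma bad_bound:
  fixes pp :: "nat set \<Rightarrow> real"
  assumes pp: "\<And>e. e \<in> Kn_edges n \<Longrightarrow> 0 \<le> pp e \<and> pp e \<le> 1 \<and> r \<le> pp e \<and> pp e \<le> q"
    and q: "0 \<le> q" and r: "r \<le> 1"
  shows "measure_pmf.prob (random_graph n pp)
       {G. \<exists>i\<in>{1..n}. L \<le> real (card (open_component n G i)) \<and> real (card (open_component n G i)) \<le> U}
   \<le> (\<Sum>k\<in>{k. k \<le> n \<and> L \<le> real k \<and> real k \<le> U}. real (n choose k) * real k ^ k * (q^(k-1) * (1-r)^(k*(n-k))))"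
proof -
  define K where "K = {k. k \<le> n \<and> L \<le> real k \<and> real k \<le> U}"
  define Sub where "Sub k = {S. S \<subseteq> {1..n} \<and> card S = k}" for k
  define T where "T k = q^(k-1) * (1-r)^(k*(n-k))" for k :: nat
  define P where "P = random_graph n pp"
  have T0: "0 \<le> T k" for k unfolding T_def using q r by simp
  have fK: "finite K" unfolding K_def by simp
  have fSub: "finite (Sub k)" for k unfolding Sub_def by (rule finite_subset[of _ "Pow {1..n}"]) auto
  have incl: "{G. \<exists>i\<in>{1..n}. L \<le> real (card (open_component n G i)) \<and> real (card (open_component n G i)) \<le> U}
      \<subseteq> (\<Union>k\<in>K. \<Union>S\<in>Sub k. \<Union>i\<in>S. \<Union>f\<in>Fset S i. Ev n S i f)"
  proof
    fix G assume "G \<in> {G. \<exists>i\<in>{1..n}. L \<le> real (card (open_component n G i)) \<and> real (card (open_component n G i)) \<le> U}"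
    then obtain i where i: "i \<in> {1..n}" and LU: "L \<le> real (card (open_component n G i))" "real (card (open_component n G i)) \<le> U"
      by blast
    define S where "S = open_component n G i"
    have Ssub: "S \<subseteq> {1..n}" unfolding S_def using comp_sub[OF i] .
    have iS: "i \<in> S" unfolding S_def open_component_def by simp
    have "card S \<le> n" using card_mono[OF _ Ssub] by simp
    hence "card S \<in> K" unfolding K_def using LU S_def by simp
    moreover have "S \<in> Sub (card S)" unfolding Sub_def using Ssub by simp
    moreover obtain f where "f \<in> Fset S i" "G \<in> Ev n S i f" using comp_Ev[OF i] S_def by blast
    ultimately show "G \<in> (\<Union>k\<in>K. \<Union>S\<in>Sub k. \<Union>i\<in>S. \<Union>f\<in>Fset S i. Ev n S i f)" using iS by blast
  qed
  have "measure_pmf.prob P {G. \<exists>i\<in>{1..n}. L \<le> real (card (open_component n G i)) \<and> real (card (open_component n G i)) \<le> U}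
      \<le> measure_pmf.prob P (\<Union>k\<in>K. \<Union>S\<in>Sub k. \<Union>i\<in>S. \<Union>f\<in>Fset S i. Ev n S i f)"
    by (rule measure_pmf.finite_measure_mono[OF incl]) simp
  also have "\<dots> \<le> (\<Sum>k\<in>K. measure_pmf.prob P (\<Union>S\<in>Sub k. \<Union>i\<in>S. \<Union>f\<in>Fset S i. Ev n S i f))"
    by (rule prob_union_le[OF fK])
  also have "\<dots> \<le> (\<Sum>k\<in>K. real (n choose k) * real k ^ k * T k)"
  proof (rule sum_mono)
    fix k assume "k \<in> K"
    have "measure_pmf.prob P (\<Union>S\<in>Sub k. \<Union>i\<in>S. \<Union>f\<in>Fset S i. Ev n S i f)
        \<le> (\<Sum>S\<in>Sub k. measure_pmf.prob P (\<Union>i\<in>S. \<Union>f\<in>Fset S i. Ev n S i f))"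
      by (rule prob_union_le[OF fSub])
    also have "\<dots> \<le> (\<Sum>S\<in>Sub k. real k ^ k * T k)"
    proof (rule sum_mono)
      fix S assume S: "S \<in> Sub k"
      have Ssub: "S \<subseteq> {1..n}" and cS: "card S = k" using S unfolding Sub_def by auto
      have fS: "finite S" using Ssub finite_subset by blast
      have "measure_pmf.prob P (\<Union>i\<in>S. \<Union>f\<in>Fset S i. Ev n S i f)
          \<le> (\<Sum>i\<in>S. measure_pmf.prob P (\<Union>f\<in>Fset S i. Ev n S i f))"
        by (rule prob_union_le[OF fS])
      also have "\<dots> \<le> (\<Sum>i\<in>S. real k ^ (k - 1) * T k)"
      proof (rule sum_mono)
        fix i assume i: "i \<in> S"
        have "measure_pmf.prob P (\<Union>f\<in>Fset S i. Ev n S i f) \<le> (\<Sum>f\<in>Fset S i. measure_pmf.prob P (Ev n S i f))"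
          by (rule prob_union_le[OF finite_Fset[OF fS]])
        also have "\<dots> \<le> (\<Sum>f\<in>Fset S i. T k)"
          by (rule sum_mono) (unfold P_def T_def cS[symmetric], rule Ev_prob[OF Ssub i _ pp], auto)
        also have "\<dots> = real (card (Fset S i)) * T k" by simp
        also have "\<dots> \<le> real k ^ (k - 1) * T k"
          using card_Fset[OF fS i] cS T0[of k] by (intro mult_right_mono) (auto simp flip: of_nat_power)
        finally show "measure_pmf.prob P (\<Union>f\<in>Fset S i. Ev n S i f) \<le> real k ^ (k - 1) * T k" .
      qed
      also have "\<dots> = real k * (real k ^ (k - 1) * T k)" using cS by simp
      also have "\<dots> \<le> real k ^ k * T k"
      proof (cases k)
        case 0 thus ?thesis using T0[of k] by simp
      next
        case (Suc m) thus ?thesis by simp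
      qed
      finally show "measure_pmf.prob P (\<Union>i\<in>S. \<Union>f\<in>Fset S i. Ev n S i f) \<le> real k ^ k * T k" .
    qed
    also have "\<dots> = real (card (Sub k)) * (real k ^ k * T k)" by simp
    also have "card (Sub k) = n choose k" unfolding Sub_def using n_subsets[of "{1..n}" k] by simp
    finally show "measure_pmf.prob P (\<Union>S\<in>Sub k. \<Union>i\<in>S. \<Union>f\<in>Fset S i. Ev n S i f) \<le> real (n choose k) * real k ^ k * T k"
      by (simp add: mult.assoc)
  qed
  finally show ?thesis unfolding P_def K_def T_def .
qed



lemma pow_le_fact_exp: "real k ^ k \<le> fact k * exp (real k)"
proof -
  have s: "summable (\<lambda>j. real k ^ j / fact j)"
    using exp_converges[of "real k"] by (simp add: sums_iff divide_inverse mult.commute scaleR_conv_of_real)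
  have "real k ^ k / fact k = (\<Sum>j\<in>{k}. real k ^ j / fact j)" by simp
  also have "\<dots> \<le> (\<Sum>j. real k ^ j / fact j)"
    by (rule sum_le_suminf[OF s]) auto
  also have "\<dots> = exp (real k)"
    using exp_converges[of "real k"] by (simp add: sums_iff divide_inverse mult.commute scaleR_conv_of_real)
  finally show ?thesis by (simp add: field_simps)
qed

lemma choose_pow_le: "real (n choose k) * real k ^ k \<le> real n ^ k * exp (real k)"
proof -
  have "real (n choose k) * fact k \<le> real n ^ k"
    using binomial_fact_pow[of n k] by (metis of_nat_fact of_nat_le_iff of_nat_mult of_nat_power)
  hence "real (n choose k) * (fact k * exp (real k)) \<le> real n ^ k * exp (real k)"
    by (simp add: mult.assoc[symmetric])
  moreover have "real (n choose k) * real k ^ k \<le> real (n choose k) * (fact k * exp (real k))"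
    by (intro mult_left_mono pow_le_fact_exp) simp
  ultimately show ?thesis by linarith
qed

lemma term_bound:
  fixes C a \<epsilon> :: real
  assumes n: "n \<ge> 1" and k: "k \<ge> 1" "real k \<le> \<epsilon> * real n" and \<epsilon>: "\<epsilon> < 1"
    and a: "0 \<le> a" "a \<le> C" and rle: "C - a \<le> real n" and C: "C > 0"
  shows "real (n choose k) * real k ^ k * (((C + a) / real n)^(k-1) * (1 - (C - a) / real n)^(k*(n-k)))
     \<le> (real n / C) * (exp 1 * (C + a) * exp (- (C - a) * (1 - \<epsilon>))) ^ k"
proof -
  define q where "q = (C + a) / real n"
  define r where "r = (C - a) / real n"
  have npos: "real n > 0" using n by simp
  have q0: "0 \<le> q" unfolding q_def using a C by simp
  have r0: "0 \<le> r" "r \<le> 1" unfolding r_def using a rle npos by auto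
  have kn: "k \<le> n"
  proof -
    have "real k \<le> real n" using k(2) \<epsilon> npos
      by (smt (verit) mult_less_cancel_right2)
    thus ?thesis by simp
  qed
  have A: "real (n choose k) * real k ^ k \<le> real n ^ k * exp (real k)" by (rule choose_pow_le)
  have B: "(1 - r)^(k*(n-k)) \<le> exp (- (C - a) * (1 - \<epsilon>) * real k)"
  proof -
    have "(1 - r)^(k*(n-k)) \<le> exp (-r)^(k*(n-k))"
      using r0 by (intro power_mono) (auto simp: exp_ge_add_one_self[of "-r", simplified])
    also have "\<dots> = exp (real (k*(n-k)) * (-r))" by (rule exp_of_nat_mult[symmetric])
    also have "\<dots> \<le> exp (- (C - a) * (1 - \<epsilon>) * real k)"
    proof -
      have "real (n - k) \<ge> (1 - \<epsilon>) * real n" using k(2) kn by (simp add: of_nat_diff algebra_simps)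
      hence "real k * real (n - k) \<ge> real k * ((1 - \<epsilon>) * real n)" by (intro mult_left_mono) auto
      hence "(C - a) / real n * (real k * real (n - k)) \<ge> (C - a) / real n * (real k * ((1 - \<epsilon>) * real n))"
        by (rule mult_left_mono) (use a npos in auto)
      also have "(C - a) / real n * (real k * ((1 - \<epsilon>) * real n)) = (C - a) * (1 - \<epsilon>) * real k"
        using npos by (simp add: field_simps)
      finally have "(C - a) * (1 - \<epsilon>) * real k \<le> r * real (k * (n - k))" unfolding r_def by simp
      hence "real (k*(n-k)) * (-r) \<le> - (C - a) * (1 - \<epsilon>) * real k" by (simp add: algebra_simps)
      thus ?thesis by simp
    qed
    finally show ?thesis .
  qed
  have Cq: "(C + a)^(k-1) \<le> (C + a)^k / C"
  proof -
    have "(C + a)^k = (C + a) * (C + a)^(k-1)" using k(1) by (metis Suc_diff_1 less_le_trans zero_less_one power_Suc)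
    moreover have "C * (C + a)^(k-1) \<le> (C + a) * (C + a)^(k-1)" using a C by (intro mult_right_mono) auto
    ultimately show ?thesis using C by (simp add: field_simps)
  qed
  have nq: "real n ^ k * q^(k-1) = real n * (C + a)^(k-1)"
  proof -
    have "real n ^ k = real n * real n ^ (k-1)" using k(1) by (metis Suc_diff_1 less_le_trans zero_less_one power_Suc)
    thus ?thesis unfolding q_def using npos by (simp add: power_divide)
  qed
  have "real (n choose k) * real k ^ k * (q^(k-1) * (1 - r)^(k*(n-k)))
      \<le> real n ^ k * exp (real k) * (q^(k-1) * exp (- (C - a) * (1 - \<epsilon>) * real k))"
  proof (rule mult_mono[OF A])
    show "q^(k-1) * (1 - r)^(k*(n-k)) \<le> q^(k-1) * exp (- (C - a) * (1 - \<epsilon>) * real k)"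
      by (rule mult_left_mono[OF B]) (use q0 in simp)
    show "0 \<le> real n ^ k * exp (real k)" by simp
    show "0 \<le> q^(k-1) * (1 - r)^(k*(n-k))" using q0 r0 by simp
  qed
  also have "\<dots> = real n * (C + a)^(k-1) * exp (real k) * exp (- (C - a) * (1 - \<epsilon>) * real k)"
    using nq by (simp add: algebra_simps)
  also have "\<dots> \<le> real n * ((C + a)^k / C) * exp (real k) * exp (- (C - a) * (1 - \<epsilon>) * real k)"
    using Cq npos by (intro mult_right_mono mult_left_mono) auto
  also have "\<dots> = (real n / C) * (exp 1 * (C + a) * exp (- (C - a) * (1 - \<epsilon>))) ^ k"
  proof -
    have "exp (real k) = exp 1 ^ k" using exp_of_nat_mult[of k 1] by simp
    moreover have "exp (- (C - a) * (1 - \<epsilon>) * real k) = exp (- (C - a) * (1 - \<epsilon>)) ^ k"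
      using exp_of_nat_mult[of k "- (C - a) * (1 - \<epsilon>)"] by (simp add: mult.commute)
    ultimately have "real n * ((C + a)^k / C) * exp (real k) * exp (- (C - a) * (1 - \<epsilon>) * real k)
       = (real n / C) * (exp 1 ^ k * (C + a)^k * exp (- (C - a) * (1 - \<epsilon>)) ^ k)"
      by (simp only:) (simp add: field_simps)
    also have "\<dots> = (real n / C) * (exp 1 * (C + a) * exp (- (C - a) * (1 - \<epsilon>))) ^ k"
      by (simp only: power_mult_distrib)
    finally show ?thesis .
  qed
  finally show ?thesis unfolding q_def r_def .
qed

lemma geom_bound:
  fixes x :: real
  assumes x: "0 \<le> x" "x < 1" and K: "finite K" "\<And>k. k \<in> K \<Longrightarrow> K0 \<le> k"
  shows "(\<Sum>k\<in>K. x ^ k) \<le> x ^ K0 / (1 - x)"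
proof -
  have "(\<Sum>k\<in>K. x ^ k) = (\<Sum>k\<in>K. x ^ K0 * x ^ (k - K0))"
    by (intro sum.cong refl) (metis K(2) le_add_diff_inverse power_add)
  also have "\<dots> = x ^ K0 * (\<Sum>k\<in>K. x ^ (k - K0))" by (simp add: sum_distrib_left)
  also have "(\<Sum>k\<in>K. x ^ (k - K0)) = (\<Sum>j\<in>(\<lambda>k. k - K0) ` K. x ^ j)"
  proof -
    have "inj_on (\<lambda>k. k - K0) K" using K(2) by (intro inj_onI) (metis le_add_diff_inverse)
    thus ?thesis by (simp add: sum.reindex)
  qed
  also have "(\<Sum>j\<in>(\<lambda>k. k - K0) ` K. x ^ j) \<le> (\<Sum>j. x ^ j)"
    by (rule sum_le_suminf) (use x K in auto)
  also have "(\<Sum>j. x ^ j) = 1 / (1 - x)" using x by (intro suminf_geometric) simp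
  finally show ?thesis using x by (simp add: mult_left_mono divide_inverse)
qed



lemma ln_add_le: "(C::real) > 0 \<Longrightarrow> 0 \<le> a \<Longrightarrow> ln (C + a) \<le> ln C + a / C"
proof -
  assume C: "C > 0" and a: "0 \<le> a"
  have "C + a = C * (1 + a / C)" using C by (simp add: distrib_left)
  have pos: "0 < 1 + a / C" using C a by (simp add: add_pos_nonneg)
  have "ln (C + a) = ln C + ln (1 + a / C)"
    by (subst \<open>C + a = C * (1 + a / C)\<close>) (use C pos in \<open>simp add: ln_mult\<close>)
  also have "ln (1 + a / C) \<le> a / C" using C a by (intro ln_add_one_self_le_self) simp
  finally show ?thesis by simp
qed

lemma x_le:
  fixes C a \<epsilon> \<omega> :: real
  assumes C: "C > 0" and a: "0 \<le> a" "a * (1 + 1 / C) \<le> \<omega> / 2" and \<epsilon>: "\<epsilon> < 1" and \<epsilon>0: "0 < \<epsilon>"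
  shows "exp 1 * (C + a) * exp (- (C - a) * (1 - \<epsilon>)) \<le> exp (- (delta C - C * \<epsilon> - \<omega> + \<omega> / 2))"
proof -
  define Y where "Y = (C - a) * (1 - \<epsilon>)"
  have cpos: "0 < C + a" using C a by simp
  have "exp (1 + ln (C + a) + (- Y)) = exp 1 * exp (ln (C + a)) * exp (- Y)" by (simp only: exp_add)
  hence "exp 1 * (C + a) * exp (- Y) = exp (1 + ln (C + a) + (- Y))"
    using cpos by simp
  hence "exp 1 * (C + a) * exp (- (C - a) * (1 - \<epsilon>)) = exp (1 + ln (C + a) - (C - a) * (1 - \<epsilon>))"
    unfolding Y_def mult_minus_left diff_conv_add_uminus .
  also have "\<dots> \<le> exp (- (delta C - C * \<epsilon> - \<omega> + \<omega> / 2))"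
  proof (rule exp_mono)
    have l: "ln (C + a) \<le> ln C + a / C" by (rule ln_add_le[OF C a(1)])
    have h: "a + a / C \<le> \<omega> / 2" using a(2) by (simp add: algebra_simps)
    have ea: "0 \<le> \<epsilon> * a" using a \<epsilon>0 by simp
    have e: "(C - a) * (1 - \<epsilon>) = C - C * \<epsilon> - a + \<epsilon> * a" by (simp add: algebra_simps)
    show "1 + ln (C + a) - (C - a) * (1 - \<epsilon>) \<le> - (delta C - C * \<epsilon> - \<omega> + \<omega> / 2)"
      unfolding delta_def e using l h ea by linarith
  qed
  finally show ?thesis .
qed



theorem lemma3:
  fixes C \<epsilon> \<omega> M \<theta> :: real
    and \<alpha> :: "nat \<Rightarrow> real"
    and p :: "nat \<Rightarrow> nat set \<Rightarrow> real"
  assumes C_pos: "C > 0" and C_ne: "C \<noteq> 1"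
    and \<alpha>_nonneg: "\<And>n. \<alpha> n \<ge> 0" and \<alpha>_lim: "\<alpha> \<longlonglongrightarrow> 0"
    and p_prob: "\<And>n e. e \<in> Kn_edges n \<Longrightarrow> 0 \<le> p n e \<and> p n e \<le> 1"
    and p_bounds: "\<And>n e. n \<ge> 1 \<Longrightarrow> e \<in> Kn_edges n \<Longrightarrow>
        (C - \<alpha> n) / real n \<le> p n e \<and> p n e \<le> (C + \<alpha> n) / real n"
    and \<epsilon>: "0 < \<epsilon>" "\<epsilon> < 1" and \<omega>: "\<omega> > 0"
    and \<delta>0: "delta C - C * \<epsilon> - \<omega> > 0"
    and M: "M > 1 / (delta C - C * \<epsilon> - \<omega>)"
    and \<theta>: "\<theta> < M * (delta C - C * \<epsilon> - \<omega>) - 1"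
  shows "\<exists>N>0. \<forall>n::nat. real n \<ge> N \<longrightarrow>
     measure_pmf.prob (random_graph n (p n))
       {G. \<exists>i\<in>{1..n}. M * ln (real n) + 1 \<le> real (card (open_component n G i))
                      \<and> real (card (open_component n G i)) \<le> \<epsilon> * real n}
     \<le> 1 / real n powr \<theta>"
proof -
  define d0 where "d0 = delta C - C * \<epsilon> - \<omega>"
  define \<rho> where "\<rho> = d0 + \<omega> / 2"
  define x0 where "x0 = exp (- \<rho>)"
  define \<gamma> where "\<gamma> = \<rho> * M - 1 - \<theta>"
  define \<eta> where "\<eta> = min (C / 2) (\<omega> / (2 * (1 + 1 / C)))"
  define A0 where "A0 = 1 / (C * (1 - x0))"
  have d0pos: "d0 > 0" using \<delta>0 unfolding d0_def .
  have Mpos: "M > 0" using M d0pos unfolding d0_def[symmetric] by (meson less_trans zero_less_divide_1_iff)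
  have \<rho>pos: "\<rho> > 0" unfolding \<rho>_def using d0pos \<omega> by simp
  have x0: "0 \<le> x0" "x0 < 1" unfolding x0_def using \<rho>pos by auto
  have \<gamma>pos: "\<gamma> > 0"
  proof -
    have "\<rho> * M = d0 * M + \<omega> / 2 * M" unfolding \<rho>_def by (simp add: algebra_simps)
    moreover have "\<omega> / 2 * M > 0" using \<omega> Mpos by simp
    moreover have "\<theta> < M * d0 - 1" using \<theta> unfolding d0_def .
    ultimately show ?thesis unfolding \<gamma>_def by (simp add: mult.commute)
  qed
  have \<eta>pos: "\<eta> > 0" unfolding \<eta>_def using C_pos \<omega> by (simp add: add_pos_pos)
  have A0pos: "A0 > 0" unfolding A0_def using C_pos x0 by simp
  have "\<forall>\<^sub>F n in sequentially. \<alpha> n < \<eta>" by (rule order_tendstoD(2)[OF \<alpha>_lim \<eta>pos])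
  then obtain N0 where N0: "\<And>n. n \<ge> N0 \<Longrightarrow> \<alpha> n < \<eta>" unfolding eventually_sequentially by blast
  define N where "N = max (real N0) (max 1 (max C (A0 powr (1 / \<gamma>))))"
  show ?thesis
  proof (intro exI[of _ N] conjI allI impI)
    show "N > 0" unfolding N_def by simp
    fix n :: nat assume nN: "N \<le> real n"
    have n1: "n \<ge> 1" and nC: "C \<le> real n" and nA: "A0 powr (1 / \<gamma>) \<le> real n" and nN0: "n \<ge> N0"
      using nN unfolding N_def by auto
    have npos: "real n > 0" using n1 by simp
    define a where "a = \<alpha> n"
    have a0: "0 \<le> a" unfolding a_def by (rule \<alpha>_nonneg)
    have a\<eta>: "a < \<eta>" unfolding a_def using N0[OF nN0] .
    have aC: "a \<le> C" using a\<eta> C_pos unfolding \<eta>_def by simp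
    have a\<omega>: "a * (1 + 1 / C) \<le> \<omega> / 2"
    proof -
      have "a \<le> \<omega> / (2 * (1 + 1 / C))" using a\<eta> unfolding \<eta>_def by simp
      moreover have "0 < 1 + 1 / C" using C_pos by (simp add: add_pos_pos)
      ultimately show ?thesis by (simp add: field_simps)
    qed
    define q where "q = (C + a) / real n"
    define r where "r = (C - a) / real n"
    define L where "L = M * ln (real n) + 1"
    define U where "U = \<epsilon> * real n"
    define K where "K = {k. k \<le> n \<and> L \<le> real k \<and> real k \<le> U}"
    define x where "x = exp 1 * (C + a) * exp (- (C - a) * (1 - \<epsilon>))"
    have pp: "\<And>e. e \<in> Kn_edges n \<Longrightarrow> 0 \<le> p n e \<and> p n e \<le> 1 \<and> r \<le> p n e \<and> p n e \<le> q"
      using p_prob p_bounds[OF n1] unfolding q_def r_def a_def by blast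
    have q0: "0 \<le> q" unfolding q_def using a0 C_pos by simp
    have r1: "r \<le> 1" unfolding r_def using a0 nC npos by (simp add: divide_le_eq_1)
    have x0le: "0 \<le> x" "x \<le> x0"
      unfolding x_def x0_def \<rho>_def d0_def using x_le[OF C_pos a0 a\<omega> \<epsilon>(2) \<epsilon>(1)] a0 C_pos by auto
    have L1: "L \<ge> 1" unfolding L_def using Mpos n1 by simp
    define K0 where "K0 = nat \<lceil>L\<rceil>"
    have K0le: "K0 \<le> k" if "k \<in> K" for k using that unfolding K_def K0_def by simp
    have "measure_pmf.prob (random_graph n (p n))
       {G. \<exists>i\<in>{1..n}. L \<le> real (card (open_component n G i)) \<and> real (card (open_component n G i)) \<le> U}
      \<le> (\<Sum>k\<in>K. real (n choose k) * real k ^ k * (q^(k-1) * (1-r)^(k*(n-k))))"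
      unfolding K_def by (rule bad_bound[OF pp q0 r1])
    also have "\<dots> \<le> (\<Sum>k\<in>K. (real n / C) * x0 ^ k)"
    proof (rule sum_mono)
      fix k assume k: "k \<in> K"
      have k1: "k \<ge> 1" using k L1 unfolding K_def by auto
      have kU: "real k \<le> \<epsilon> * real n" using k unfolding K_def U_def by auto
      have "real (n choose k) * real k ^ k * (q^(k-1) * (1-r)^(k*(n-k))) \<le> (real n / C) * x ^ k"
        unfolding q_def r_def x_def
        by (rule term_bound[OF n1 k1 kU \<epsilon>(2) a0 aC]) (use nC a0 C_pos in auto)
      also have "\<dots> \<le> (real n / C) * x0 ^ k"
        using x0le npos C_pos by (intro mult_left_mono power_mono) auto
      finally show "real (n choose k) * real k ^ k * (q^(k-1) * (1-r)^(k*(n-k))) \<le> (real n / C) * x0 ^ k" .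
    qed
    also have "\<dots> = (real n / C) * (\<Sum>k\<in>K. x0 ^ k)" by (simp add: sum_distrib_left)
    also have "\<dots> \<le> (real n / C) * (x0 ^ K0 / (1 - x0))"
      using geom_bound[OF x0, of K K0] K0le npos C_pos unfolding K_def
      by (intro mult_left_mono) auto
    also have "\<dots> \<le> (real n / C) * (real n powr (- (\<rho> * M)) / (1 - x0))"
    proof -
      have "x0 ^ K0 = exp (real K0 * (- \<rho>))" unfolding x0_def by (rule exp_of_nat_mult[symmetric])
      also have "\<dots> \<le> exp (ln (real n) * (- (\<rho> * M)))"
      proof (rule exp_mono)
        have "M * ln (real n) \<le> real K0" unfolding K0_def using real_nat_ceiling_ge[of L] unfolding L_def by linarith
        hence "\<rho> * (M * ln (real n)) \<le> \<rho> * real K0" using \<rho>pos by (intro mult_left_mono) auto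
        thus "real K0 * (- \<rho>) \<le> ln (real n) * (- (\<rho> * M))" by (simp add: algebra_simps)
      qed
      also have "\<dots> = real n powr (- (\<rho> * M))" unfolding powr_def using npos by simp
      finally have "x0 ^ K0 \<le> real n powr (- (\<rho> * M))" .
      thus ?thesis using x0 npos C_pos by (intro mult_left_mono divide_right_mono) auto
    qed
    also have "\<dots> = A0 * real n powr (1 - \<rho> * M)"
    proof -
      have "real n powr (1 - \<rho> * M) = real n powr (1 + (- (\<rho> * M)))" by simp
      also have "\<dots> = real n powr 1 * real n powr (- (\<rho> * M))" by (rule powr_add)
      also have "\<dots> = real n * real n powr (- (\<rho> * M))" using npos by simp
      finally have h: "real n powr (1 - \<rho> * M) = real n * real n powr (- (\<rho> * M))" .
      show ?thesis unfolding A0_def h by simp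
    qed
    also have "\<dots> \<le> real n powr \<gamma> * real n powr (1 - \<rho> * M)"
    proof (rule mult_right_mono)
      have "A0 = (A0 powr (1 / \<gamma>)) powr \<gamma>" using A0pos \<gamma>pos by (simp add: powr_powr)
      also have "\<dots> \<le> real n powr \<gamma>" using nA \<gamma>pos by (intro powr_mono2) auto
      finally show "A0 \<le> real n powr \<gamma>" .
    qed simp
    also have "\<dots> = real n powr (- \<theta>)" unfolding \<gamma>_def by (simp add: powr_add[symmetric])
    also have "\<dots> = 1 / real n powr \<theta>" by (rule powr_minus_divide)
    finally show "measure_pmf.prob (random_graph n (p n))
       {G. \<exists>i\<in>{1..n}. M * ln (real n) + 1 \<le> real (card (open_component n G i))
                      \<and> real (card (open_component n G i)) \<le> \<epsilon> * real n}
     \<le> 1 / real n powr \<theta>" unfolding L_def U_def .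
  qed
qed

end
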